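(* The complete bipartite graph $K_{3,3}$ is B-factorizable.
   Context: Let $V$ be a finite set with $|V|$ even. $K=\binom{V}{2}$ is the set of 2-element subsets of $V$. An equal partition of $V$ is an unordered pair $\{H,A\}$ of disjoint subsets with $H\cup A=V$ and $|H|=|A|=|V|/2$; $C=C(V)$ is the set of equal partitions. For $c=\{H,A\}\in C$, $B_c$ is the complete bipartite graph with parts $H$ and $A$. Vectors live in $\mathbb N^{K\cup C}$ with $\mathbb N=\{0,1,2,\dots\}$; $v|_K$ denotes the restriction to coordinates in $K$. For $E\subseteq K$, $\chi_E\in\{0,1\}^K$ is its indicator vector. For $E\subseteq K$ and $c\in C$, $\chi_{E,c}\in\mathbb N^{K\cup C}$ has $K$-components $\chi_E$ and $C$-components equal to the indicator of $c$. $PM(V)=\{\chi_{q,c}: c\in C,\ q\text{ a perfect matching of }B_c\}$. For $\mathcal M\subseteq\mathbb N^{K\cup C}$, $\mathbf N(\mathcal M)$ is the set of finite nonnegative integer combinations of elements of $\mathcal M$, and $\overline{\mathbf N}(\mathcal M)=\{v\in\mathbb N^{K\cup C}: kv\in\mathbf N(\mathcal M)\text{ for some integer }k\ge1\}$. A regular graph $G=(V,E)$ is B-factorizable if every $v\in\overline{\mathbf N}(PM(V))$ with $v|_K=\chi_E$ belongs to $\mathbf N(PM(V))$. *)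

theory Defs
  imports Main
begin

text \<open>Coordinates of \<open>\<nat>^(K \<union> C)\<close>: \<open>Inl e\<close> for \<open>e \<in> K\<close>, \<open>Inr c\<close> for \<open>c \<in> C\<close>.\<close>
type_synonym 'a vec = "('a set + 'a set set) \<Rightarrow> nat"

definition Kset :: "'a set \<Rightarrow> 'a set set" where
  "Kset V = {e. e \<subseteq> V \<and> card e = 2}"

definition Cset :: "'a set \<Rightarrow> 'a set set set" where
  "Cset V = {{H, A} | H A. H \<inter> A = {} \<and> H \<union> A = V
                          \<and> card H = card V div 2 \<and> card A = card V div 2}"

definition vecs :: "'a set \<Rightarrow> 'a vec set" where
  "vecs V = {v. \<forall>x. v x \<noteq> 0 \<longrightarrow> x \<in> Inl ` Kset V \<union> Inr ` Cset V}"

definition Bedges :: "'a set set \<Rightarrow> 'a set set" where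
  "Bedges c = {{u, v} | u v. \<exists>X\<in>c. \<exists>Y\<in>c. X \<noteq> Y \<and> u \<in> X \<and> v \<in> Y}"

definition perfect_matching :: "'a set \<Rightarrow> 'a set set \<Rightarrow> 'a set set \<Rightarrow> bool" where
  "perfect_matching V F q \<longleftrightarrow> q \<subseteq> F \<and> (\<forall>x\<in>V. \<exists>!e. e \<in> q \<and> x \<in> e)"

definition chi_EC :: "'a set set \<Rightarrow> 'a set set \<Rightarrow> 'a vec" where
  "chi_EC E c = (\<lambda>x. case x of Inl e \<Rightarrow> (if e \<in> E then 1 else 0)
                              | Inr d \<Rightarrow> (if d = c then 1 else 0))"

definition PM :: "'a set \<Rightarrow> 'a vec set" where
  "PM V = {chi_EC q c | c q. c \<in> Cset V \<and> perfect_matching V (Bedges c) q}"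

inductive_set Ncomb :: "'a vec set \<Rightarrow> 'a vec set" for M where
  zero: "(\<lambda>_. 0) \<in> Ncomb M"
| add: "v \<in> Ncomb M \<Longrightarrow> m \<in> M \<Longrightarrow> (\<lambda>x. v x + m x) \<in> Ncomb M"

definition Nbar :: "'a set \<Rightarrow> 'a vec set \<Rightarrow> 'a vec set" where
  "Nbar V M = {v \<in> vecs V. \<exists>k::nat. k \<ge> 1 \<and> (\<lambda>x. k * v x) \<in> Ncomb M}"

definition regular_graph :: "'a set \<Rightarrow> 'a set set \<Rightarrow> bool" where
  "regular_graph V E \<longleftrightarrow> finite V \<and> E \<subseteq> Kset V \<and>
     (\<exists>d. \<forall>x\<in>V. card {e \<in> E. x \<in> e} = d)"

definition B_factorizable :: "'a set \<Rightarrow> 'a set set \<Rightarrow> bool" where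
  "B_factorizable V E \<longleftrightarrow> regular_graph V E \<and>
     (\<forall>v \<in> Nbar V (PM V).
        (\<forall>e \<in> Kset V. v (Inl e) = (if e \<in> E then 1 else 0)) \<longrightarrow> v \<in> Ncomb (PM V))"

end

theory Submission
  imports Defs
begin


lemma bedges_cross:
  assumes "X \<inter> Y = {}" "{u,w} \<in> Bedges {X,Y}" "u \<noteq> w"
  shows "(u\<in>X \<and> w\<in>Y) \<or> (u\<in>Y \<and> w\<in>X)"
  using assms unfolding Bedges_def by (auto simp: doubleton_eq_iff)

lemma fix6:
  assumes "X \<inter> Y = {}" "X \<union> Y = {x1,x2,x3,x4,x5,x6}"
   "x1 \<in> X" "x2 \<in> X" "x3 \<in> X" "x4 \<in> Y" "x5 \<in> Y" "x6 \<in> Y"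
  shows "{X,Y} = {{x1,x2,x3},{x4,x5,x6}}"
proof -
  have nX: "x4 \<notin> X" "x5 \<notin> X" "x6 \<notin> X" using assms by blast+
  have nY: "x1 \<notin> Y" "x2 \<notin> Y" "x3 \<notin> Y" using assms by blast+
  have "X = {x1,x2,x3,x4,x5,x6} \<inter> X" using assms(2) by blast
  also have "\<dots> = {x1,x2,x3}" using assms nX by simp
  finally have X: "X = {x1,x2,x3}" .
  have "Y = {x1,x2,x3,x4,x5,x6} \<inter> Y" using assms(2) by blast
  also have "\<dots> = {x4,x5,x6}" using assms nY by simp
  finally have Y: "Y = {x4,x5,x6}" .
  show ?thesis unfolding X Y by simp
qed

locale K33 =
  fixes h1 h2 h3 a1 a2 a3 :: 'a
  assumes dist: "distinct [h1,h2,h3,a1,a2,a3]"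
begin

abbreviation "HH \<equiv> {h1,h2,h3}"
abbreviation "AA \<equiv> {a1,a2,a3}"
abbreviation "VV \<equiv> HH \<union> AA"
abbreviation "EE \<equiv> {{u, v} | u v. u \<in> HH \<and> v \<in> AA}"

definition cf :: "'a \<Rightarrow> 'a \<Rightarrow> 'a set set" where
  "cf h a = {insert h (AA - {a}), insert a (HH - {h})}"

lemma part_class:
  assumes XY: "X \<inter> Y = {}" "X \<union> Y = VV"
    and b: "b1 \<in> AA" "b2 \<in> AA" "b3 \<in> AA" "distinct [b1,b2,b3]"
    and c1: "{h1,b1} \<in> Bedges {X,Y}" and c2: "{h2,b2} \<in> Bedges {X,Y}" and c3: "{h3,b3} \<in> Bedges {X,Y}"
  shows "{X,Y} = {HH,AA} \<or> {X,Y} = cf h1 b1 \<or> {X,Y} = cf h2 b2 \<or> {X,Y} = cf h3 b3"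
proof -
  have AAb: "AA = {b1,b2,b3}" using b dist by auto
  have n: "h1 \<noteq> b1" "h2 \<noteq> b2" "h3 \<noteq> b3" using b dist by auto
  have x1: "(h1\<in>X \<and> b1\<in>Y) \<or> (h1\<in>Y \<and> b1\<in>X)" using bedges_cross[OF XY(1) c1 n(1)] .
  have x2: "(h2\<in>X \<and> b2\<in>Y) \<or> (h2\<in>Y \<and> b2\<in>X)" using bedges_cross[OF XY(1) c2 n(2)] .
  have x3: "(h3\<in>X \<and> b3\<in>Y) \<or> (h3\<in>Y \<and> b3\<in>X)" using bedges_cross[OF XY(1) c3 n(3)] .
  have d: "distinct [h1,h2,h3,b1,b2,b3]" using b dist by auto
  have Am: "AA - {b1} = {b2,b3}" "AA - {b2} = {b1,b3}" "AA - {b3} = {b1,b2}" using AAb d by auto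
  have Hm: "HH - {h1} = {h2,h3}" "HH - {h2} = {h1,h3}" "HH - {h3} = {h1,h2}" using dist by auto
  have cfs: "cf h1 b1 = {{h1,b2,b3},{b1,h2,h3}}" "cf h2 b2 = {{h2,b1,b3},{b2,h1,h3}}"
     "cf h3 b3 = {{h3,b1,b2},{b3,h1,h2}}" unfolding cf_def Am Hm by simp_all
  have sw: "{X,Y} = {Y,X}" by auto
  have XY2: "Y \<inter> X = {}" "Y \<union> X = VV" using XY by auto
  note V = XY(2) AAb
  from x1 show ?thesis
  proof (elim disjE conjE)
    assume 1: "h1 \<in> X" "b1 \<in> Y"
    from x2 show ?thesis
    proof (elim disjE conjE)
      assume 2: "h2 \<in> X" "b2 \<in> Y"
      from x3 show ?thesis
      proof (elim disjE conjE)
        assume 3: "h3 \<in> X" "b3 \<in> Y"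
        have "{X,Y} = {{h1,h2,h3},{b1,b2,b3}}" by (rule fix6) (use XY V 1 2 3 in auto)
        then show ?thesis using AAb by simp
      next
        assume 3: "h3 \<in> Y" "b3 \<in> X"
        have "{Y,X} = {{h3,b1,b2},{b3,h1,h2}}" by (rule fix6) (use XY V 1 2 3 in auto)
        then show ?thesis using cfs sw by simp
      qed
    next
      assume 2: "h2 \<in> Y" "b2 \<in> X"
      from x3 show ?thesis
      proof (elim disjE conjE)
        assume 3: "h3 \<in> X" "b3 \<in> Y"
        have "{Y,X} = {{h2,b1,b3},{b2,h1,h3}}" by (rule fix6) (use XY V 1 2 3 in auto)
        then show ?thesis using cfs sw by simp
      next
        assume 3: "h3 \<in> Y" "b3 \<in> X"
        have "{X,Y} = {{h1,b2,b3},{b1,h2,h3}}" by (rule fix6) (use XY V 1 2 3 in auto)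
        then show ?thesis using cfs sw by simp
      qed
    qed
  next
    assume 1: "h1 \<in> Y" "b1 \<in> X"
    from x2 show ?thesis
    proof (elim disjE conjE)
      assume 2: "h2 \<in> X" "b2 \<in> Y"
      from x3 show ?thesis
      proof (elim disjE conjE)
        assume 3: "h3 \<in> X" "b3 \<in> Y"
        have "{Y,X} = {{h1,b2,b3},{b1,h2,h3}}" by (rule fix6) (use XY V 1 2 3 in auto)
        then show ?thesis using cfs sw by simp
      next
        assume 3: "h3 \<in> Y" "b3 \<in> X"
        have "{X,Y} = {{h2,b1,b3},{b2,h1,h3}}" by (rule fix6) (use XY V 1 2 3 in auto)
        then show ?thesis using cfs sw by simp
      qed
    next
      assume 2: "h2 \<in> Y" "b2 \<in> X"
      from x3 show ?thesis
      proof (elim disjE conjE)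
        assume 3: "h3 \<in> X" "b3 \<in> Y"
        have "{X,Y} = {{h3,b1,b2},{b3,h1,h2}}" by (rule fix6) (use XY V 1 2 3 in auto)
        then show ?thesis using cfs sw by simp
      next
        assume 3: "h3 \<in> Y" "b3 \<in> X"
        have "{Y,X} = {{h1,h2,h3},{b1,b2,b3}}" by (rule fix6) (use XY V 1 2 3 in auto)
        then show ?thesis using AAb sw by simp
      qed
    qed
  qed
qed

lemma q_form:
  assumes qE: "q \<subseteq> EE" and u: "\<forall>x\<in>VV. \<exists>!e. e \<in> q \<and> x \<in> e"
  shows "\<exists>b1 b2 b3. b1 \<in> AA \<and> b2 \<in> AA \<and> b3 \<in> AA \<and> distinct [b1,b2,b3] \<and> q = {{h1,b1},{h2,b2},{h3,b3}}"
proof -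
  have ex: "\<exists>b\<in>AA. {h,b} \<in> q \<and> (\<forall>e\<in>q. h \<in> e \<longrightarrow> e = {h,b})" if h: "h \<in> HH" for h
  proof -
    from u h obtain e where e: "e \<in> q" "h \<in> e" and uq: "\<forall>e'. e' \<in> q \<and> h \<in> e' \<longrightarrow> e' = e" by blast
    from e qE obtain x y where xy: "e = {x,y}" "x \<in> HH" "y \<in> AA" by blast
    have "h \<noteq> y" using h xy dist by auto
    hence "h = x" using e xy by auto
    thus ?thesis using xy e uq by blast
  qed
  obtain b1 where b1: "b1 \<in> AA" "{h1,b1} \<in> q" "\<forall>e\<in>q. h1 \<in> e \<longrightarrow> e = {h1,b1}" using ex[of h1] by auto
  obtain b2 where b2: "b2 \<in> AA" "{h2,b2} \<in> q" "\<forall>e\<in>q. h2 \<in> e \<longrightarrow> e = {h2,b2}" using ex[of h2] by auto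
  obtain b3 where b3: "b3 \<in> AA" "{h3,b3} \<in> q" "\<forall>e\<in>q. h3 \<in> e \<longrightarrow> e = {h3,b3}" using ex[of h3] by auto
  have ub: "e = e'" if "b \<in> AA" "e \<in> q" "e' \<in> q" "b \<in> e" "b \<in> e'" for b e e'
    using u that by blast
  have "b1 \<noteq> b2" 
  proof
    assume "b1 = b2"
    hence "{h1,b1} = {h2,b2}" using ub[of b1 "{h1,b1}" "{h2,b2}"] b1(1,2) b2(2) by simp
    thus False using dist b1(1) b2(1) by (auto simp: doubleton_eq_iff)
  qed
  moreover have "b1 \<noteq> b3" 
  proof
    assume "b1 = b3"
    hence "{h1,b1} = {h3,b3}" using ub[of b1 "{h1,b1}" "{h3,b3}"] b1(1,2) b3(2) by simp
    thus False using dist b1(1) b3(1) by (auto simp: doubleton_eq_iff)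
  qed
  moreover have "b2 \<noteq> b3" 
  proof
    assume "b2 = b3"
    hence "{h2,b2} = {h3,b3}" using ub[of b2 "{h2,b2}" "{h3,b3}"] b2(1,2) b3(2) by simp
    thus False using dist b2(1) b3(1) by (auto simp: doubleton_eq_iff)
  qed
  moreover have "q = {{h1,b1},{h2,b2},{h3,b3}}"
  proof
    show "{{h1,b1},{h2,b2},{h3,b3}} \<subseteq> q" using b1(2) b2(2) b3(2) by simp
    show "q \<subseteq> {{h1,b1},{h2,b2},{h3,b3}}"
    proof
      fix e assume "e \<in> q"
      with qE obtain x y where xy: "e = {x,y}" "x \<in> HH" "y \<in> AA" by blast
      from xy(2) have "x = h1 \<or> x = h2 \<or> x = h3" by simp
      then show "e \<in> {{h1,b1},{h2,b2},{h3,b3}}"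
      proof (elim disjE)
        assume "x = h1" hence "h1 \<in> e" using xy(1) by simp
        hence "e = {h1,b1}" using b1(3) \<open>e \<in> q\<close> by blast
        thus ?thesis by simp
      next
        assume "x = h2" hence "h2 \<in> e" using xy(1) by simp
        hence "e = {h2,b2}" using b2(3) \<open>e \<in> q\<close> by blast
        thus ?thesis by simp
      next
        assume "x = h3" hence "h3 \<in> e" using xy(1) by simp
        hence "e = {h3,b3}" using b3(3) \<open>e \<in> q\<close> by blast
        thus ?thesis by simp
      qed
    qed
  qed
  ultimately show ?thesis using b1(1) b2(1) b3(1) by (intro exI[of _ b1] exI[of _ b2] exI[of _ b3]) simp
qed

abbreviation "P1 \<equiv> {{h1,a1},{h2,a2},{h3,a3}}"
abbreviation "P2 \<equiv> {{h1,a2},{h2,a3},{h3,a1}}"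
abbreviation "P3 \<equiv> {{h1,a3},{h2,a1},{h3,a2}}"
abbreviation "Q1 \<equiv> {{h1,a1},{h2,a3},{h3,a2}}"
abbreviation "Q2 \<equiv> {{h1,a2},{h2,a1},{h3,a3}}"
abbreviation "Q3 \<equiv> {{h1,a3},{h2,a2},{h3,a1}}"

lemma perm_cases:
  assumes "b1 \<in> AA" "b2 \<in> AA" "b3 \<in> AA" "distinct [b1,b2,b3]"
  shows "(b1,b2,b3) = (a1,a2,a3) \<or> (b1,b2,b3) = (a2,a3,a1) \<or> (b1,b2,b3) = (a3,a1,a2) \<or>
         (b1,b2,b3) = (a1,a3,a2) \<or> (b1,b2,b3) = (a2,a1,a3) \<or> (b1,b2,b3) = (a3,a2,a1)"
  using assms by auto

lemma six:
  assumes "q \<subseteq> EE" "\<forall>x\<in>VV. \<exists>!e. e \<in> q \<and> x \<in> e"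
  shows "q = P1 \<or> q = P2 \<or> q = P3 \<or> q = Q1 \<or> q = Q2 \<or> q = Q3"
proof -
  obtain b1 b2 b3 where b: "b1 \<in> AA" "b2 \<in> AA" "b3 \<in> AA" "distinct [b1,b2,b3]" "q = {{h1,b1},{h2,b2},{h3,b3}}"
    using q_form[OF assms] by blast
  show ?thesis using perm_cases[OF b(1-4)] b(5) by (elim disjE) simp_all
qed

lemma other_a: "a \<in> AA \<Longrightarrow> a' \<in> AA \<Longrightarrow> \<exists>a''\<in>AA. a'' \<noteq> a \<and> a'' \<noteq> a'"
  using dist by auto

lemma cf_ne_c0: assumes "h \<in> HH" "a \<in> AA" shows "cf h a \<noteq> {HH,AA}"
proof
  assume "cf h a = {HH,AA}"
  hence "insert h (AA - {a}) = HH \<or> insert h (AA - {a}) = AA" unfolding cf_def by (auto simp: doubleton_eq_iff)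
  moreover obtain a'' where "a'' \<in> AA" "a'' \<noteq> a" using other_a[OF assms(2) assms(2)] by blast
  moreover have "h \<notin> AA" using assms(1) dist by auto
  moreover have "a'' \<notin> HH" using \<open>a'' \<in> AA\<close> dist by auto
  ultimately show False by blast
qed

lemma cf_inj: assumes "h \<in> HH" "a \<in> AA" "h' \<in> HH" "a' \<in> AA" "cf h a = cf h' a'" shows "h = h' \<and> a = a'"
proof -
  have hA: "h \<notin> AA" "h' \<notin> AA" using assms dist by auto
  have aH: "a \<notin> HH" "a' \<notin> HH" using assms dist by auto
  from assms(5) have "(insert h (AA - {a}) = insert h' (AA - {a'}) \<and> insert a (HH - {h}) = insert a' (HH - {h'})) \<or>
    (insert h (AA - {a}) = insert a' (HH - {h'}) \<and> insert a (HH - {h}) = insert h' (AA - {a'}))"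
    unfolding cf_def by (simp add: doubleton_eq_iff)
  moreover obtain a'' where a'': "a'' \<in> AA" "a'' \<noteq> a" "a'' \<noteq> a'" using other_a[OF assms(2) assms(4)] by blast
  moreover have "a'' \<notin> HH" using a'' dist by auto
  ultimately show ?thesis using hA aH by blast
qed

end



definition sumv :: "('a set set \<times> 'a set set) list \<Rightarrow> 'a vec" where
  "sumv ps = (\<lambda>x. sum_list (map (\<lambda>p. chi_EC (fst p) (snd p) x) ps))"

definition valid :: "'a set \<Rightarrow> 'a set set \<times> 'a set set \<Rightarrow> bool" where
  "valid V p \<longleftrightarrow> snd p \<in> Cset V \<and> perfect_matching V (Bedges (snd p)) (fst p)"

lemma sumv_Nil[simp]: "sumv [] = (\<lambda>_. 0)" by (simp add: sumv_def)
lemma sumv_Cons: "sumv (p # ps) x = chi_EC (fst p) (snd p) x + sumv ps x" by (simp add: sumv_def)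
lemma sumv_append: "sumv (ps @ qs) x = sumv ps x + sumv qs x" by (simp add: sumv_def)

lemma Ncomb_list:
  assumes "w \<in> Ncomb (PM V)"
  shows "\<exists>ps. (\<forall>p\<in>set ps. valid V p) \<and> w = sumv ps"
  using assms
proof (induction rule: Ncomb.induct)
  case zero
  then show ?case by (intro exI[of _ "[]"]) simp
next
  case (add v m)
  then obtain ps where ps: "\<forall>p\<in>set ps. valid V p" "v = sumv ps" by blast
  from add.hyps(2) obtain c q where m: "m = chi_EC q c" "c \<in> Cset V" "perfect_matching V (Bedges c) q"
    unfolding PM_def by blast
  have "(\<lambda>x. v x + m x) = sumv (ps @ [(q,c)])"
    by (rule ext) (simp add: ps(2) m(1) sumv_append sumv_Cons)
  moreover have "\<forall>p\<in>set (ps @ [(q,c)]). valid V p" using ps(1) m(2,3) by (simp add: valid_def)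
  ultimately show ?case by blast
qed

lemma list_Ncomb:
  assumes "\<forall>p\<in>set ps. valid V p"
  shows "sumv ps \<in> Ncomb (PM V)"
  using assms
proof (induction ps rule: rev_induct)
  case Nil
  then show ?case by (simp add: Ncomb.zero)
next
  case (snoc p ps)
  have "chi_EC (fst p) (snd p) \<in> PM V" using snoc.prems unfolding valid_def PM_def by auto
  from Ncomb.add[OF snoc.IH[OF] this] snoc.prems
  have "(\<lambda>x. sumv ps x + chi_EC (fst p) (snd p) x) \<in> Ncomb (PM V)" by auto
  moreover have "sumv (ps @ [p]) = (\<lambda>x. sumv ps x + chi_EC (fst p) (snd p) x)"
    by (auto simp: sumv_append sumv_Cons)
  ultimately show ?case by simp
qed

lemma sum_list_ind: "sum_list (map (\<lambda>p. if P p then 1 else 0) ps) = (length (filter P ps) :: nat)"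
  by (induction ps) auto

lemma sumv_Inl: "sumv ps (Inl e) = length (filter (\<lambda>p. e \<in> fst p) ps)"
  unfolding sumv_def chi_EC_def by (simp add: sum_list_ind)

lemma sumv_Inr: "sumv ps (Inr d) = length (filter (\<lambda>p. snd p = d) ps)"
  unfolding sumv_def chi_EC_def by (simp add: sum_list_ind eq_commute)

lemma filter_len_mono:
  assumes "\<forall>x\<in>set xs. P x \<longrightarrow> Q x"
  shows "length (filter P xs) \<le> length (filter Q xs)"
  using assms by (induction xs) auto

lemma filter_len_lt:
  assumes "\<forall>x\<in>set xs. P x \<longrightarrow> Q x" "y \<in> set xs" "Q y" "\<not> P y"
  shows "length (filter P xs) < length (filter Q xs)"
  using assms
proof (induction xs)
  case Nil then show ?case by simp
next
  case (Cons a xs)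
  have le: "length (filter P xs) \<le> length (filter Q xs)"
    using Cons.prems(1) filter_len_mono[of xs P Q] by simp
  show ?case
  proof (cases "y = a")
    case True
    then show ?thesis using le Cons.prems(3,4) by simp
  next
    case False
    then have "y \<in> set xs" using Cons.prems(2) by simp
    then have "length (filter P xs) < length (filter Q xs)" using Cons.IH Cons.prems(1,3,4) by simp
    then show ?thesis using Cons.prems(1) by (cases "P a") auto
  qed
qed

lemma filter_len_eq:
  assumes "\<forall>x\<in>set xs. P x \<longrightarrow> Q x" "length (filter P xs) = length (filter Q xs)"
  shows "\<forall>x\<in>set xs. Q x \<longrightarrow> P x"
  using filter_len_lt[OF assms(1)] assms(2) by fastforce

lemma filter_len_disj:
  assumes "\<forall>x\<in>set xs. \<not> (P x \<and> Q x)"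
  shows "length (filter (\<lambda>x. P x \<or> Q x) xs) = length (filter P xs) + length (filter Q xs)"
  using assms by (induction xs) auto

lemma sumv_total:
  assumes "finite L" "\<forall>p\<in>set ps. snd p \<in> L"
  shows "(\<Sum>d\<in>L. sumv ps (Inr d)) = length ps"
  using assms(2)
proof (induction ps)
  case Nil then show ?case by simp
next
  case (Cons p ps)
  have "(\<Sum>d\<in>L. sumv (p#ps) (Inr d)) = (\<Sum>d\<in>L. chi_EC (fst p) (snd p) (Inr d)) + (\<Sum>d\<in>L. sumv ps (Inr d))"
    by (simp add: sumv_Cons sum.distrib)
  also have "(\<Sum>d\<in>L. chi_EC (fst p) (snd p) (Inr d)) = 1"
    using Cons.prems assms(1) by (simp add: chi_EC_def sum.delta)
  finally show ?case using Cons by simp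
qed




context K33 begin

lemma D: "h1 \<noteq> h2" "h1 \<noteq> h3" "h1 \<noteq> a1" "h1 \<noteq> a2" "h1 \<noteq> a3" "h2 \<noteq> h1" "h2 \<noteq> h3" "h2 \<noteq> a1" "h2 \<noteq> a2" "h2 \<noteq> a3" "h3 \<noteq> h1" "h3 \<noteq> h2" "h3 \<noteq> a1" "h3 \<noteq> a2" "h3 \<noteq> a3" "a1 \<noteq> h1" "a1 \<noteq> h2" "a1 \<noteq> h3" "a1 \<noteq> a2" "a1 \<noteq> a3" "a2 \<noteq> h1" "a2 \<noteq> h2" "a2 \<noteq> h3" "a2 \<noteq> a1" "a2 \<noteq> a3" "a3 \<noteq> h1" "a3 \<noteq> h2" "a3 \<noteq> h3" "a3 \<noteq> a1" "a3 \<noteq> a2"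
  using dist by auto

definition tP1 :: "'a set set \<Rightarrow> bool" where "tP1 q \<longleftrightarrow> {h1,a1} \<in> q \<and> {h2,a2} \<in> q"
definition tP2 :: "'a set set \<Rightarrow> bool" where "tP2 q \<longleftrightarrow> {h1,a2} \<in> q \<and> {h2,a3} \<in> q"
definition tP3 :: "'a set set \<Rightarrow> bool" where "tP3 q \<longleftrightarrow> {h1,a3} \<in> q \<and> {h2,a1} \<in> q"
definition tQ1 :: "'a set set \<Rightarrow> bool" where "tQ1 q \<longleftrightarrow> {h1,a1} \<in> q \<and> {h2,a3} \<in> q"
definition tQ2 :: "'a set set \<Rightarrow> bool" where "tQ2 q \<longleftrightarrow> {h1,a2} \<in> q \<and> {h2,a1} \<in> q"
definition tQ3 :: "'a set set \<Rightarrow> bool" where "tQ3 q \<longleftrightarrow> {h1,a3} \<in> q \<and> {h2,a2} \<in> q"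

lemma tab:
  assumes "q = P1 \<or> q = P2 \<or> q = P3 \<or> q = Q1 \<or> q = Q2 \<or> q = Q3"
  shows "{h1,a1} \<in> q \<longleftrightarrow> tP1 q \<or> tQ1 q"
    "\<not> (tP1 q \<and> tQ1 q)"
    "{h1,a2} \<in> q \<longleftrightarrow> tP2 q \<or> tQ2 q"
    "\<not> (tP2 q \<and> tQ2 q)"
    "{h1,a3} \<in> q \<longleftrightarrow> tP3 q \<or> tQ3 q"
    "\<not> (tP3 q \<and> tQ3 q)"
    "{h2,a1} \<in> q \<longleftrightarrow> tP3 q \<or> tQ2 q"
    "\<not> (tP3 q \<and> tQ2 q)"
    "{h2,a2} \<in> q \<longleftrightarrow> tP1 q \<or> tQ3 q"
    "\<not> (tP1 q \<and> tQ3 q)"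
    "{h2,a3} \<in> q \<longleftrightarrow> tP2 q \<or> tQ1 q"
    "\<not> (tP2 q \<and> tQ1 q)"
    "{h3,a1} \<in> q \<longleftrightarrow> tP2 q \<or> tQ3 q"
    "\<not> (tP2 q \<and> tQ3 q)"
    "{h3,a2} \<in> q \<longleftrightarrow> tP3 q \<or> tQ1 q"
    "\<not> (tP3 q \<and> tQ1 q)"
    "{h3,a3} \<in> q \<longleftrightarrow> tP1 q \<or> tQ2 q"
    "\<not> (tP1 q \<and> tQ2 q)"
  using assms by ((elim disjE; simp add: tP1_def tP2_def tP3_def tQ1_def tQ2_def tQ3_def doubleton_eq_iff D))+

lemma tab_eq:
  assumes "q = P1 \<or> q = P2 \<or> q = P3 \<or> q = Q1 \<or> q = Q2 \<or> q = Q3"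
  shows "tP1 q \<Longrightarrow> q = P1"
    "tP2 q \<Longrightarrow> q = P2"
    "tP3 q \<Longrightarrow> q = P3"
    "tQ1 q \<Longrightarrow> q = Q1"
    "tQ2 q \<Longrightarrow> q = Q2"
    "tQ3 q \<Longrightarrow> q = Q3"
  using assms by ((elim disjE; simp add: tP1_def tP2_def tP3_def tQ1_def tQ2_def tQ3_def doubleton_eq_iff D))+

lemma tab_h1:
  assumes "q = P1 \<or> q = P2 \<or> q = P3 \<or> q = Q1 \<or> q = Q2 \<or> q = Q3"
  shows "{h1,a1} \<in> q \<or> {h1,a2} \<in> q \<or> {h1,a3} \<in> q" "\<not> ({h1,a1} \<in> q \<and> ({h1,a2} \<in> q \<or> {h1,a3} \<in> q))"
    "\<not> ({h1,a2} \<in> q \<and> {h1,a3} \<in> q)"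
  using assms by ((elim disjE; simp add: doubleton_eq_iff D))+

lemma partP:
  "(if e\<in>P1 then 1 else 0) + (if e\<in>P2 then 1 else 0) + (if e\<in>P3 then 1 else 0) = (if e\<in>EE then (1::nat) else 0)"
proof (cases "e \<in> EE")
  case True
  then obtain u w where uw: "e = {u,w}" "u \<in> HH" "w \<in> AA" by blast
  have "u = h1 \<or> u = h2 \<or> u = h3" "w = a1 \<or> w = a2 \<or> w = a3" using uw(2,3) by simp_all
  with True show ?thesis unfolding uw(1) by (elim disjE; simp add: doubleton_eq_iff D)
next
  case False
  have "P1 \<subseteq> EE" "P2 \<subseteq> EE" "P3 \<subseteq> EE" by blast+
  with False have "e \<notin> P1" "e \<notin> P2" "e \<notin> P3" by blast+
  with False show ?thesis by simp
qed

lemma partQ: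
  "(if e\<in>Q1 then 1 else 0) + (if e\<in>Q2 then 1 else 0) + (if e\<in>Q3 then 1 else 0) = (if e\<in>EE then (1::nat) else 0)"
proof (cases "e \<in> EE")
  case True
  then obtain u w where uw: "e = {u,w}" "u \<in> HH" "w \<in> AA" by blast
  have "u = h1 \<or> u = h2 \<or> u = h3" "w = a1 \<or> w = a2 \<or> w = a3" using uw(2,3) by simp_all
  with True show ?thesis unfolding uw(1) by (elim disjE; simp add: doubleton_eq_iff D)
next
  case False
  have "Q1 \<subseteq> EE" "Q2 \<subseteq> EE" "Q3 \<subseteq> EE" by blast+
  with False have "e \<notin> Q1" "e \<notin> Q2" "e \<notin> Q3" by blast+
  with False show ?thesis by simp
qed


abbreviation "c0 \<equiv> {HH,AA}"
definition "LL = insert c0 ((\<lambda>(h,a). cf h a) ` (HH \<times> AA))"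

lemma LL_fin: "finite LL" unfolding LL_def by simp

lemma chi_Inl: "chi_EC q c (Inl e) = (if e \<in> q then 1 else 0)" by (simp add: chi_EC_def)
lemma chi_Inr: "chi_EC q c (Inr d) = (if d = c then 1 else 0)" by (simp add: chi_EC_def)

lemma ex_filter: "0 < length (filter P xs) \<Longrightarrow> \<exists>x\<in>set xs. P x"
  by (induction xs) (auto split: if_splits)

lemma final:
  fixes v :: "'a vec"
  assumes k: "k \<ge> 1"
    and kv: "\<forall>x. k * v x = sumv ps x"
    and vInl: "\<forall>e. v (Inl e) = (if e \<in> EE then 1 else 0)"
    and val: "\<forall>p\<in>set ps. valid VV p"
    and lab: "\<forall>p\<in>set ps. snd p = c0 \<or> (\<exists>h\<in>HH. \<exists>a\<in>AA. {h,a} \<in> fst p \<and> snd p = cf h a)"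
    and len: "length ps = 3*k"
    and pin: "p1 \<in> set ps" "p2 \<in> set ps" "p3 \<in> set ps"
    and part: "\<forall>e. (if e\<in>fst p1 then 1 else 0) + (if e\<in>fst p2 then 1 else 0) + (if e\<in>fst p3 then 1 else 0) = (if e\<in>EE then (1::nat) else 0)"
  shows "v \<in> Ncomb (PM VV)"
proof -
  define v' where "v' = sumv [p1,p2,p3]"
  have v'N: "v' \<in> Ncomb (PM VV)" unfolding v'_def by (rule list_Ncomb) (use val pin in simp)
  have cntE: "length (filter (\<lambda>p. e \<in> fst p) ps) = k * (if e\<in>EE then 1 else 0)" for e
    using kv[rule_format, of "Inl e"] vInl[rule_format, of e] by (simp add: sumv_Inl)
  have cntD: "length (filter (\<lambda>p. snd p = d) ps) = k * v (Inr d)" for d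
    using kv[rule_format, of "Inr d"] by (simp add: sumv_Inr)
  have v'Inl: "v' (Inl e) = (if e\<in>fst p1 then 1 else 0) + (if e\<in>fst p2 then 1 else 0) + (if e\<in>fst p3 then 1 else 0)" for e
    unfolding v'_def by (simp add: sumv_Cons chi_Inl)
  have v'Inr: "v' (Inr d) = (if d = snd p1 then 1 else 0) + (if d = snd p2 then 1 else 0) + (if d = snd p3 then 1 else 0)" for d
    unfolding v'_def by (simp add: sumv_Cons chi_Inr)
  have labL: "\<forall>p\<in>set ps. snd p \<in> LL"
  proof
    fix p assume "p \<in> set ps"
    with lab have "snd p = c0 \<or> (\<exists>h\<in>HH. \<exists>a\<in>AA. {h,a} \<in> fst p \<and> snd p = cf h a)" by blast
    then show "snd p \<in> LL"
    proof
      assume "snd p = c0" then show ?thesis unfolding LL_def by simp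
    next
      assume "\<exists>h\<in>HH. \<exists>a\<in>AA. {h,a} \<in> fst p \<and> snd p = cf h a"
      then obtain h a where ha: "h \<in> HH" "a \<in> AA" "snd p = cf h a" by blast
      have "snd p \<in> (\<lambda>(h,a). cf h a) ` (HH \<times> AA)"
        by (rule image_eqI[of _ _ "(h,a)"]) (simp add: ha(3), rule SigmaI[OF ha(1) ha(2)])
      then show ?thesis unfolding LL_def by blast
    qed
  qed
  have nonc0: "v (Inr d) = v' (Inr d)" if "d \<noteq> c0" for d
  proof (cases "d \<in> LL")
    case False
    then have "\<forall>p\<in>set ps. snd p \<noteq> d" using labL by auto
    then have "filter (\<lambda>p. snd p = d) ps = []" by (simp add: filter_empty_conv)
    then have "k * v (Inr d) = 0" using cntD[of d] by simp
    then have "v (Inr d) = 0" using k by simp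
    moreover have "v' (Inr d) = 0" using \<open>\<forall>p\<in>set ps. snd p \<noteq> d\<close> pin v'Inr by auto
    ultimately show ?thesis by simp
  next
    case True
    with that obtain h a where ha: "h \<in> HH" "a \<in> AA" "d = cf h a" unfolding LL_def by auto
    have imp: "\<forall>p\<in>set ps. snd p = d \<longrightarrow> {h,a} \<in> fst p"
    proof (intro ballI impI)
      fix p assume p: "p \<in> set ps" "snd p = d"
      from lab p(1) have "snd p = c0 \<or> (\<exists>h\<in>HH. \<exists>a\<in>AA. {h,a} \<in> fst p \<and> snd p = cf h a)" by blast
      moreover have "snd p \<noteq> c0" using p(2) ha cf_ne_c0 by simp
      ultimately obtain h' a' where h'a': "h' \<in> HH" "a' \<in> AA" "{h',a'} \<in> fst p" "snd p = cf h' a'" by blast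
      then have "h = h' \<and> a = a'" using cf_inj[OF ha(1,2) h'a'(1,2)] p(2) ha(3) by simp
      then show "{h,a} \<in> fst p" using h'a'(3) by simp
    qed
    have haE: "{h,a} \<in> EE" using ha by blast
    have le: "k * v (Inr d) \<le> k" using filter_len_mono[OF imp] cntD[of d] cntE[of "{h,a}"] haE by simp
    then have le1: "v (Inr d) \<le> 1" using k mult_le_cancel1[of k "v (Inr d)" 1] by simp
    show ?thesis
    proof (cases "v (Inr d) = 0")
      case True
      then have "filter (\<lambda>p. snd p = d) ps = []" using cntD[of d] by simp
      then have "\<forall>p\<in>set ps. snd p \<noteq> d" by (simp add: filter_empty_conv)
      then have "v' (Inr d) = 0" using pin v'Inr by auto
      then show ?thesis using True by simp
    next
      case False
      then have v1: "v (Inr d) = 1" using le1 by simp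
      have "length (filter (\<lambda>p. snd p = d) ps) = length (filter (\<lambda>p. {h,a} \<in> fst p) ps)"
        using cntD[of d] cntE[of "{h,a}"] haE v1 by simp
      from filter_len_eq[OF imp this] imp
      have iff: "\<forall>p\<in>set ps. snd p = d \<longleftrightarrow> {h,a} \<in> fst p" by blast
      have "v' (Inr d) = (if {h,a}\<in>fst p1 then 1 else 0) + (if {h,a}\<in>fst p2 then 1 else 0) + (if {h,a}\<in>fst p3 then 1 else 0)"
        using v'Inr[of d] iff pin by (simp add: eq_commute[of d])
      also have "\<dots> = 1" using part haE by simp
      finally show ?thesis using v1 by simp
    qed
  qed
  have c0L: "c0 \<in> LL" unfolding LL_def by simp
  have T1: "(\<Sum>d\<in>LL. sumv ps (Inr d)) = length ps" using sumv_total[OF LL_fin labL] .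
  have "(\<Sum>d\<in>LL. sumv ps (Inr d)) = k * (\<Sum>d\<in>LL. v (Inr d))"
    using kv by (simp add: sum_distrib_left)
  then have Tv: "(\<Sum>d\<in>LL. v (Inr d)) = 3" using T1 len k by simp
  have "(\<Sum>d\<in>LL. v' (Inr d)) = length [p1,p2,p3]"
    unfolding v'_def using sumv_total[OF LL_fin, of "[p1,p2,p3]"] labL pin by simp
  then have Tv': "(\<Sum>d\<in>LL. v' (Inr d)) = 3" by simp
  have s1: "(\<Sum>d\<in>LL. v (Inr d)) = v (Inr c0) + (\<Sum>d\<in>LL-{c0}. v (Inr d))"
    using sum.remove[OF LL_fin c0L] .
  have s2: "(\<Sum>d\<in>LL. v' (Inr d)) = v' (Inr c0) + (\<Sum>d\<in>LL-{c0}. v' (Inr d))"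
    using sum.remove[OF LL_fin c0L] .
  have s3: "(\<Sum>d\<in>LL-{c0}. v (Inr d)) = (\<Sum>d\<in>LL-{c0}. v' (Inr d))"
    by (rule sum.cong) (auto intro: nonc0)
  have c0eq: "v (Inr c0) = v' (Inr c0)" using s1 s2 s3 Tv Tv' by simp
  have "v = v'"
  proof
    fix x show "v x = v' x"
    proof (cases x)
      case (Inl e) then show ?thesis using vInl v'Inl part by simp
    next
      case (Inr d) then show ?thesis using nonc0 c0eq by (cases "d = c0") auto
    qed
  qed
  then show ?thesis using v'N by simp
qed

end



context K33 begin

lemma EEK: "EE \<subseteq> Kset VV"
proof
  fix e assume "e \<in> EE"
  then obtain u w where uw: "e = {u,w}" "u \<in> HH" "w \<in> AA" by blast
  have "u \<noteq> w" using uw(2,3) D by auto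
  then show "e \<in> Kset VV" unfolding Kset_def using uw by auto
qed

lemma mainK:
  assumes vN: "v \<in> Nbar VV (PM VV)" and ve: "\<forall>e\<in>Kset VV. v (Inl e) = (if e \<in> EE then 1 else 0)"
  shows "v \<in> Ncomb (PM VV)"
proof -
  from vN obtain k where vv: "v \<in> vecs VV" and k: "k \<ge> 1" and kN: "(\<lambda>x. k * v x) \<in> Ncomb (PM VV)"
    unfolding Nbar_def by blast
  from Ncomb_list[OF kN] obtain ps where val: "\<forall>p\<in>set ps. valid VV p" and kps: "(\<lambda>x. k * v x) = sumv ps" by blast
  have kv: "\<forall>x. k * v x = sumv ps x"
  proof
    fix x show "k * v x = sumv ps x" using fun_cong[OF kps, of x] by simp
  qed
  have vInl: "\<forall>e. v (Inl e) = (if e \<in> EE then 1 else 0)"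
  proof
    fix e show "v (Inl e) = (if e \<in> EE then 1 else 0)"
    proof (cases "e \<in> Kset VV")
      case True then show ?thesis using ve by simp
    next
      case False
      have "v (Inl e) = 0"
      proof (rule ccontr)
        assume "v (Inl e) \<noteq> 0"
        with vv have "Inl e \<in> Inl ` Kset VV \<union> Inr ` Cset VV" unfolding vecs_def by blast
        with False show False by blast
      qed
      moreover have "e \<notin> EE" using False EEK by blast
      ultimately show ?thesis by simp
    qed
  qed
  have cntE: "length (filter (\<lambda>p. e \<in> fst p) ps) = k * (if e\<in>EE then 1 else 0)" for e
    using kv[rule_format, of "Inl e"] vInl[rule_format, of e] by (simp add: sumv_Inl)
  have qE: "\<forall>p\<in>set ps. fst p \<subseteq> EE"
  proof (intro ballI subsetI)
    fix p e assume p: "p \<in> set ps" and e: "e \<in> fst p"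
    show "e \<in> EE"
    proof (rule ccontr)
      assume "e \<notin> EE"
      then have "length (filter (\<lambda>p. e \<in> fst p) ps) = 0" using cntE[of e] by (simp only: if_not_P if_False mult_0_right)
      then show False using p e by (simp add: filter_empty_conv)
    qed
  qed
  have pm: "fst p \<subseteq> Bedges (snd p)" "\<forall>x\<in>VV. \<exists>!e. e \<in> fst p \<and> x \<in> e" if "p \<in> set ps" for p
  proof -
    have "valid VV p" using val that by blast
    then show "fst p \<subseteq> Bedges (snd p)" "\<forall>x\<in>VV. \<exists>!e. e \<in> fst p \<and> x \<in> e"
      unfolding valid_def perfect_matching_def by blast+
  qed
  have sixp: "fst p = P1 \<or> fst p = P2 \<or> fst p = P3 \<or> fst p = Q1 \<or> fst p = Q2 \<or> fst p = Q3" if "p \<in> set ps" for p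
    using six[OF qE[rule_format, OF that] pm(2)[OF that]] .
  have lab: "\<forall>p\<in>set ps. snd p = c0 \<or> (\<exists>h\<in>HH. \<exists>a\<in>AA. {h,a} \<in> fst p \<and> snd p = cf h a)"
  proof
    fix p assume p: "p \<in> set ps"
    have "snd p \<in> Cset VV" using val p unfolding valid_def by blast
    then obtain X Y where XY: "snd p = {X,Y}" "X \<inter> Y = {}" "X \<union> Y = VV" unfolding Cset_def by blast
    obtain b1 b2 b3 where b: "b1\<in>AA" "b2\<in>AA" "b3\<in>AA" "distinct [b1,b2,b3]" "fst p = {{h1,b1},{h2,b2},{h3,b3}}"
      using q_form[OF qE[rule_format, OF p] pm(2)[OF p]] by blast
    have "fst p \<subseteq> Bedges {X,Y}" using pm(1)[OF p] XY(1) by simp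
    then have c: "{h1,b1} \<in> Bedges {X,Y}" "{h2,b2} \<in> Bedges {X,Y}" "{h3,b3} \<in> Bedges {X,Y}"
      using b(5) by simp_all
    have "{X,Y} = c0 \<or> {X,Y} = cf h1 b1 \<or> {X,Y} = cf h2 b2 \<or> {X,Y} = cf h3 b3"
      using part_class[OF XY(2,3) b(1-4) c] .
    then show "snd p = c0 \<or> (\<exists>h\<in>HH. \<exists>a\<in>AA. {h,a} \<in> fst p \<and> snd p = cf h a)"
    proof (elim disjE)
      assume "{X,Y} = c0" thus ?thesis using XY(1) by simp
    next
      assume "{X,Y} = cf h1 b1"
      then have hb: "{h1,b1} \<in> fst p \<and> snd p = cf h1 b1" using b(5) XY(1) by simp
      show ?thesis by (rule disjI2, rule bexI[where x=h1], rule bexI[where x=b1]) (use hb b(1) in simp_all)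
    next
      assume "{X,Y} = cf h2 b2"
      then have hb: "{h2,b2} \<in> fst p \<and> snd p = cf h2 b2" using b(5) XY(1) by simp
      show ?thesis by (rule disjI2, rule bexI[where x=h2], rule bexI[where x=b2]) (use hb b(2) in simp_all)
    next
      assume "{X,Y} = cf h3 b3"
      then have hb: "{h3,b3} \<in> fst p \<and> snd p = cf h3 b3" using b(5) XY(1) by simp
      show ?thesis by (rule disjI2, rule bexI[where x=h3], rule bexI[where x=b3]) (use hb b(3) in simp_all)
    qed
  qed
  define n where "n t = length (filter (\<lambda>p. t (fst p)) ps)" for t :: "'a set set \<Rightarrow> bool"
  have eq11: "n tP1 + n tQ1 = k"
  proof -
    have "filter (\<lambda>p. {h1,a1} \<in> fst p) ps = filter (\<lambda>p. tP1 (fst p) \<or> tQ1 (fst p)) ps"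
      by (intro filter_cong refl) (simp add: tab(1)[OF sixp])
    moreover have "\<forall>p\<in>set ps. \<not> (tP1 (fst p) \<and> tQ1 (fst p))" using tab(2)[OF sixp] by blast
    moreover have "{h1,a1} \<in> EE" by blast
    ultimately show ?thesis using cntE[of "{h1,a1}"] unfolding n_def by (simp add: filter_len_disj)
  qed
  have eq12: "n tP2 + n tQ2 = k"
  proof -
    have "filter (\<lambda>p. {h1,a2} \<in> fst p) ps = filter (\<lambda>p. tP2 (fst p) \<or> tQ2 (fst p)) ps"
      by (intro filter_cong refl) (simp add: tab(3)[OF sixp])
    moreover have "\<forall>p\<in>set ps. \<not> (tP2 (fst p) \<and> tQ2 (fst p))" using tab(4)[OF sixp] by blast
    moreover have "{h1,a2} \<in> EE" by blast
    ultimately show ?thesis using cntE[of "{h1,a2}"] unfolding n_def by (simp add: filter_len_disj)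
  qed
  have eq13: "n tP3 + n tQ3 = k"
  proof -
    have "filter (\<lambda>p. {h1,a3} \<in> fst p) ps = filter (\<lambda>p. tP3 (fst p) \<or> tQ3 (fst p)) ps"
      by (intro filter_cong refl) (simp add: tab(5)[OF sixp])
    moreover have "\<forall>p\<in>set ps. \<not> (tP3 (fst p) \<and> tQ3 (fst p))" using tab(6)[OF sixp] by blast
    moreover have "{h1,a3} \<in> EE" by blast
    ultimately show ?thesis using cntE[of "{h1,a3}"] unfolding n_def by (simp add: filter_len_disj)
  qed
  have eq21: "n tP3 + n tQ2 = k"
  proof -
    have "filter (\<lambda>p. {h2,a1} \<in> fst p) ps = filter (\<lambda>p. tP3 (fst p) \<or> tQ2 (fst p)) ps"
      by (intro filter_cong refl) (simp add: tab(7)[OF sixp])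
    moreover have "\<forall>p\<in>set ps. \<not> (tP3 (fst p) \<and> tQ2 (fst p))" using tab(8)[OF sixp] by blast
    moreover have "{h2,a1} \<in> EE" by blast
    ultimately show ?thesis using cntE[of "{h2,a1}"] unfolding n_def by (simp add: filter_len_disj)
  qed
  have eq22: "n tP1 + n tQ3 = k"
  proof -
    have "filter (\<lambda>p. {h2,a2} \<in> fst p) ps = filter (\<lambda>p. tP1 (fst p) \<or> tQ3 (fst p)) ps"
      by (intro filter_cong refl) (simp add: tab(9)[OF sixp])
    moreover have "\<forall>p\<in>set ps. \<not> (tP1 (fst p) \<and> tQ3 (fst p))" using tab(10)[OF sixp] by blast
    moreover have "{h2,a2} \<in> EE" by blast
    ultimately show ?thesis using cntE[of "{h2,a2}"] unfolding n_def by (simp add: filter_len_disj)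
  qed
  have eq23: "n tP2 + n tQ1 = k"
  proof -
    have "filter (\<lambda>p. {h2,a3} \<in> fst p) ps = filter (\<lambda>p. tP2 (fst p) \<or> tQ1 (fst p)) ps"
      by (intro filter_cong refl) (simp add: tab(11)[OF sixp])
    moreover have "\<forall>p\<in>set ps. \<not> (tP2 (fst p) \<and> tQ1 (fst p))" using tab(12)[OF sixp] by blast
    moreover have "{h2,a3} \<in> EE" by blast
    ultimately show ?thesis using cntE[of "{h2,a3}"] unfolding n_def by (simp add: filter_len_disj)
  qed
  have eq31: "n tP2 + n tQ3 = k"
  proof -
    have "filter (\<lambda>p. {h3,a1} \<in> fst p) ps = filter (\<lambda>p. tP2 (fst p) \<or> tQ3 (fst p)) ps"
      by (intro filter_cong refl) (simp add: tab(13)[OF sixp])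
    moreover have "\<forall>p\<in>set ps. \<not> (tP2 (fst p) \<and> tQ3 (fst p))" using tab(14)[OF sixp] by blast
    moreover have "{h3,a1} \<in> EE" by blast
    ultimately show ?thesis using cntE[of "{h3,a1}"] unfolding n_def by (simp add: filter_len_disj)
  qed
  have eq32: "n tP3 + n tQ1 = k"
  proof -
    have "filter (\<lambda>p. {h3,a2} \<in> fst p) ps = filter (\<lambda>p. tP3 (fst p) \<or> tQ1 (fst p)) ps"
      by (intro filter_cong refl) (simp add: tab(15)[OF sixp])
    moreover have "\<forall>p\<in>set ps. \<not> (tP3 (fst p) \<and> tQ1 (fst p))" using tab(16)[OF sixp] by blast
    moreover have "{h3,a2} \<in> EE" by blast
    ultimately show ?thesis using cntE[of "{h3,a2}"] unfolding n_def by (simp add: filter_len_disj)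
  qed
  have eq33: "n tP1 + n tQ2 = k"
  proof -
    have "filter (\<lambda>p. {h3,a3} \<in> fst p) ps = filter (\<lambda>p. tP1 (fst p) \<or> tQ2 (fst p)) ps"
      by (intro filter_cong refl) (simp add: tab(17)[OF sixp])
    moreover have "\<forall>p\<in>set ps. \<not> (tP1 (fst p) \<and> tQ2 (fst p))" using tab(18)[OF sixp] by blast
    moreover have "{h3,a3} \<in> EE" by blast
    ultimately show ?thesis using cntE[of "{h3,a3}"] unfolding n_def by (simp add: filter_len_disj)
  qed
  have len: "length ps = 3 * k"
  proof -
    have all: "filter (\<lambda>p. {h1,a1}\<in>fst p \<or> ({h1,a2}\<in>fst p \<or> {h1,a3}\<in>fst p)) ps = ps"
      using tab_h1(1)[OF sixp] by (simp add: filter_True)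
    have x1: "\<forall>p\<in>set ps. \<not> ({h1,a1}\<in>fst p \<and> ({h1,a2}\<in>fst p \<or> {h1,a3}\<in>fst p))" using tab_h1(2)[OF sixp] by blast
    have x2: "\<forall>p\<in>set ps. \<not> ({h1,a2}\<in>fst p \<and> {h1,a3}\<in>fst p)" using tab_h1(3)[OF sixp] by blast
    have "length ps = length (filter (\<lambda>p. {h1,a1}\<in>fst p) ps) + length (filter (\<lambda>p. {h1,a2}\<in>fst p) ps) + length (filter (\<lambda>p. {h1,a3}\<in>fst p) ps)"
      using filter_len_disj[OF x1] filter_len_disj[OF x2] all by simp
    moreover have "{h1,a1} \<in> EE" "{h1,a2} \<in> EE" "{h1,a3} \<in> EE" by blast+
    ultimately show ?thesis using cntE[of "{h1,a1}"] cntE[of "{h1,a2}"] cntE[of "{h1,a3}"] by simp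
  qed
  have getp: "\<exists>p\<in>set ps. t (fst p)" if "0 < n t" for t
    using ex_filter[of "\<lambda>p. t (fst p)" ps] that unfolding n_def by simp
  show ?thesis
  proof (cases "0 < n tP1")
    case True
    then have "0 < n tP2" "0 < n tP3" using eq11 eq23 eq32 by linarith+
    with True obtain p1 p2 p3 where p: "p1 \<in> set ps" "tP1 (fst p1)" "p2 \<in> set ps" "tP2 (fst p2)" "p3 \<in> set ps" "tP3 (fst p3)"
      using getp by metis
    have f: "fst p1 = P1" "fst p2 = P2" "fst p3 = P3"
      using tab_eq(1)[OF sixp[OF p(1)] p(2)] tab_eq(2)[OF sixp[OF p(3)] p(4)] tab_eq(3)[OF sixp[OF p(5)] p(6)] by simp_all
    show ?thesis
      by (rule final[OF k kv vInl val lab len p(1) p(3) p(5)]) (use partP in \<open>simp add: f\<close>)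
  next
    case False
    then have "0 < n tQ1" "0 < n tQ2" "0 < n tQ3" using k eq11 eq23 eq32 eq12 eq13 by linarith+
    then obtain p1 p2 p3 where p: "p1 \<in> set ps" "tQ1 (fst p1)" "p2 \<in> set ps" "tQ2 (fst p2)" "p3 \<in> set ps" "tQ3 (fst p3)"
      using getp by metis
    have f: "fst p1 = Q1" "fst p2 = Q2" "fst p3 = Q3"
      using tab_eq(4)[OF sixp[OF p(1)] p(2)] tab_eq(5)[OF sixp[OF p(3)] p(4)] tab_eq(6)[OF sixp[OF p(5)] p(6)] by simp_all
    show ?thesis
      by (rule final[OF k kv vInl val lab len p(1) p(3) p(5)]) (use partQ in \<open>simp add: f\<close>)
  qed
qed

end



context K33 begin

lemma deg: "x \<in> VV \<Longrightarrow> card {e \<in> EE. x \<in> e} = 3"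
proof -
  assume x: "x \<in> VV"
  show ?thesis
  proof (cases "x \<in> HH")
    case True
    have xA: "x \<notin> AA" using True D by auto
    have "{e \<in> EE. x \<in> e} = (\<lambda>a. {x,a}) ` AA"
    proof (rule set_eqI)
      fix e show "e \<in> {e \<in> EE. x \<in> e} \<longleftrightarrow> e \<in> (\<lambda>a. {x,a}) ` AA"
      proof
        assume "e \<in> {e \<in> EE. x \<in> e}"
        then obtain u w where uw: "e = {u,w}" "u \<in> HH" "w \<in> AA" "x \<in> e" by blast
        have "x \<noteq> w" using uw(3) xA by blast
        then have "x = u" using uw(1,4) by blast
        then show "e \<in> (\<lambda>a. {x,a}) ` AA" using uw(1,3) by blast
      next
        assume "e \<in> (\<lambda>a. {x,a}) ` AA"
        then obtain a where "a \<in> AA" "e = {x,a}" by blast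
        then show "e \<in> {e \<in> EE. x \<in> e}" using True by blast
      qed
    qed
    moreover have "inj_on (\<lambda>a. {x,a}) AA"
      by (rule inj_onI) (use xA in \<open>auto simp: doubleton_eq_iff\<close>)
    moreover have "card AA = 3" using D by simp
    ultimately show ?thesis by (metis card_image)
  next
    case False
    then have xA: "x \<in> AA" using x by blast
    have xH: "x \<notin> HH" using False .
    have "{e \<in> EE. x \<in> e} = (\<lambda>h. {h,x}) ` HH"
    proof (rule set_eqI)
      fix e show "e \<in> {e \<in> EE. x \<in> e} \<longleftrightarrow> e \<in> (\<lambda>h. {h,x}) ` HH"
      proof
        assume "e \<in> {e \<in> EE. x \<in> e}"
        then obtain u w where uw: "e = {u,w}" "u \<in> HH" "w \<in> AA" "x \<in> e" by blast
        have "x \<noteq> u" using uw(2) xH by blast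
        then have "x = w" using uw(1,4) by blast
        then show "e \<in> (\<lambda>h. {h,x}) ` HH" using uw(1,2) by blast
      next
        assume "e \<in> (\<lambda>h. {h,x}) ` HH"
        then obtain h where "h \<in> HH" "e = {h,x}" by blast
        then show "e \<in> {e \<in> EE. x \<in> e}" using xA by blast
      qed
    qed
    moreover have "inj_on (\<lambda>h. {h,x}) HH"
      by (rule inj_onI) (use xH in \<open>auto simp: doubleton_eq_iff\<close>)
    moreover have "card HH = 3" using D by simp
    ultimately show ?thesis by (metis card_image)
  qed
qed

lemma Bfact: "B_factorizable VV EE"
  unfolding B_factorizable_def regular_graph_def
proof (intro conjI ballI impI)
  show "finite VV" by simp
  show "EE \<subseteq> Kset VV" by (rule EEK)
  show "\<exists>d. \<forall>x\<in>VV. card {e \<in> EE. x \<in> e} = d" using deg by blast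
next
  fix v assume "v \<in> Nbar VV (PM VV)" "\<forall>e\<in>Kset VV. v (Inl e) = (if e \<in> EE then 1 else 0)"
  then show "v \<in> Ncomb (PM VV)" by (rule mainK)
qed

end

theorem mainTheorem11:
  fixes H A :: "'a set"
  assumes "card H = 3" and "card A = 3" and "H \<inter> A = {}"
  shows "B_factorizable (H \<union> A) {{u, v} | u v. u \<in> H \<and> v \<in> A}"
proof -
  from assms(1) obtain h1 h2 h3 where H: "H = {h1,h2,h3}" "h1 \<noteq> h2" "h2 \<noteq> h3" "h1 \<noteq> h3"
    unfolding card_3_iff by blast
  from assms(2) obtain a1 a2 a3 where A: "A = {a1,a2,a3}" "a1 \<noteq> a2" "a2 \<noteq> a3" "a1 \<noteq> a3"
    unfolding card_3_iff by blast
  have d: "distinct [h1,h2,h3,a1,a2,a3]" using H A assms(3) by auto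
  interpret K33 h1 h2 h3 a1 a2 a3 by unfold_locales (rule d)
  show ?thesis unfolding H(1) A(1) by (rule Bfact)
qed


end
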